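(* Let $G$ be a graph of order $n \ge 3$. Suppose that for every vertex $v \in V(G)$ and for all $u,w \in N(v)$ we have $\deg_{\langle N(v)\rangle}(u) + \deg_{\langle N(v)\rangle}(w) \ge \deg_G(v)$. Then $G$ is hamiltonian and $\{1,2\}$-extendable.
   Context: $N(v)$ denotes the open neighbourhood of $v$ and $\langle X\rangle$ the subgraph of $G$ induced by $X \subseteq V(G)$. A graph $G$ is $\{1,2\}$-extendable if for every non-hamiltonian cycle $C$ of $G$ there exists a cycle $C'$ of length $|C|+1$ or $|C|+2$ whose vertex set contains all vertices of $C$. *)

theory Defs
  imports Main
begin

definition simple_graph :: "'a set \<Rightarrow> ('a \<Rightarrow> 'a \<Rightarrow> bool) \<Rightarrow> bool" where
  "simple_graph V E \<longleftrightarrow> finite V \<and> (\<forall>x y. E x y \<longrightarrow> x \<in> V \<and> y \<in> V)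
     \<and> (\<forall>x y. E x y \<longrightarrow> E y x) \<and> (\<forall>x. \<not> E x x)"

definition nbhd :: "'a set \<Rightarrow> ('a \<Rightarrow> 'a \<Rightarrow> bool) \<Rightarrow> 'a \<Rightarrow> 'a set" where
  "nbhd V E v = {u \<in> V. E v u}"

definition degree :: "'a set \<Rightarrow> ('a \<Rightarrow> 'a \<Rightarrow> bool) \<Rightarrow> 'a \<Rightarrow> nat" where
  "degree V E v = card (nbhd V E v)"

definition induced_degree :: "'a set \<Rightarrow> ('a \<Rightarrow> 'a \<Rightarrow> bool) \<Rightarrow> 'a \<Rightarrow> nat" where
  "induced_degree X E u = card {w \<in> X. E u w}"

definition is_path :: "'a set \<Rightarrow> ('a \<Rightarrow> 'a \<Rightarrow> bool) \<Rightarrow> 'a list \<Rightarrow> bool" where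
  "is_path V E p \<longleftrightarrow> p \<noteq> [] \<and> set p \<subseteq> V \<and> (\<forall>i. Suc i < length p \<longrightarrow> E (p ! i) (p ! Suc i))"

definition connected_graph :: "'a set \<Rightarrow> ('a \<Rightarrow> 'a \<Rightarrow> bool) \<Rightarrow> bool" where
  "connected_graph V E \<longleftrightarrow> V \<noteq> {} \<and>
     (\<forall>x\<in>V. \<forall>y\<in>V. \<exists>p. is_path V E p \<and> hd p = x \<and> last p = y)"

definition is_cycle :: "'a set \<Rightarrow> ('a \<Rightarrow> 'a \<Rightarrow> bool) \<Rightarrow> 'a list \<Rightarrow> bool" where
  "is_cycle V E c \<longleftrightarrow> length c \<ge> 3 \<and> distinct c \<and> set c \<subseteq> V
     \<and> (\<forall>i. Suc i < length c \<longrightarrow> E (c ! i) (c ! Suc i)) \<and> E (last c) (hd c)"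

definition hamiltonian :: "'a set \<Rightarrow> ('a \<Rightarrow> 'a \<Rightarrow> bool) \<Rightarrow> bool" where
  "hamiltonian V E \<longleftrightarrow> (\<exists>c. is_cycle V E c \<and> set c = V)"

definition extendable_12 :: "'a set \<Rightarrow> ('a \<Rightarrow> 'a \<Rightarrow> bool) \<Rightarrow> bool" where
  "extendable_12 V E \<longleftrightarrow> (\<forall>c. is_cycle V E c \<and> set c \<noteq> V \<longrightarrow>
     (\<exists>c'. is_cycle V E c' \<and> set c \<subseteq> set c' \<and>
           (length c' = length c + 1 \<or> length c' = length c + 2)))"

end

theory Submission imports Defs begin

lemma is_cycle_alt:
  "is_cycle V E c \<longleftrightarrow> length c \<ge> 3 \<and> distinct c \<and> set c \<subseteq> V \<and> successively E c \<and> E (last c) (hd c)"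
  unfolding is_cycle_def successively_conv_nth by blast

lemma sg_sym: "simple_graph V E \<Longrightarrow> E x y \<Longrightarrow> E y x"
  unfolding simple_graph_def by blast
lemma sg_irr: "simple_graph V E \<Longrightarrow> \<not> E x x"
  unfolding simple_graph_def by blast
lemma sg_V: "simple_graph V E \<Longrightarrow> E x y \<Longrightarrow> x \<in> V \<and> y \<in> V"
  unfolding simple_graph_def by blast

lemma cycle_rotate1:
  assumes sg: "simple_graph V E" and c: "is_cycle V E c"
  shows "is_cycle V E (rotate1 c)"
proof (cases c)
  case Nil then show ?thesis using c by (simp add: is_cycle_def)
next
  case (Cons a xs)
  from c Cons have xs: "xs \<noteq> []" by (auto simp: is_cycle_def)
  from c Cons have s: "successively E (a#xs)" and l: "E (last (a#xs)) a"
    by (auto simp: is_cycle_alt)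
  have "successively E xs" "E a (hd xs)" using s xs by (cases xs; auto)+
  moreover have "E (last xs) a" using l xs by simp
  ultimately show ?thesis using c Cons xs
    by (auto simp: is_cycle_alt successively_append_iff)
qed

lemma cycle_rotate:
  assumes sg: "simple_graph V E" and c: "is_cycle V E c"
  shows "is_cycle V E (rotate n c)"
  by (induction n) (auto simp: c cycle_rotate1[OF sg])

lemma cycle_snoc:
  assumes sg: "simple_graph V E" and c: "is_cycle V E c" and y: "y \<notin> set c" "y \<in> V"
    and e1: "E (last c) y" and e2: "E y (hd c)"
  shows "is_cycle V E (c @ [y])"
proof -
  have "c \<noteq> []" using c by (auto simp: is_cycle_def)
  then show ?thesis using c y e1 e2 by (auto simp: is_cycle_alt successively_append_iff)
qed

lemma cycle_flip:
  assumes sg: "simple_graph V E" and c: "is_cycle V E (P @ Q)" and ne: "P \<noteq> []" "Q \<noteq> []"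
    and x: "x \<notin> set (P @ Q)" "x \<in> V"
    and e1: "E (hd P) (hd Q)" and e2: "E (last Q) x" and e3: "E x (last P)"
  shows "is_cycle V E (rev P @ Q @ [x])"
proof -
  have symE: "(\<lambda>a b. E b a) = E" using sg_sym[OF sg] by (intro ext) blast
  from c have "successively E P" "successively E Q"
    by (auto simp: is_cycle_alt successively_append_iff)
  then have "successively E (rev P)" unfolding successively_rev symE by blast
  then show ?thesis using c ne x e1 e2 e3
    by (auto simp: is_cycle_alt successively_append_iff hd_rev last_rev)
qed

definition nxt :: "'a list \<Rightarrow> 'a \<Rightarrow> 'a" where
  "nxt c v = c ! (Suc (inv_into {..<length c} ((!) c) v) mod length c)"

lemma nxt_nth:
  assumes "distinct c" "i < length c"
  shows "nxt c (c ! i) = c ! (Suc i mod length c)"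
proof -
  have "inj_on ((!) c) {..<length c}" using assms(1) by (simp add: inj_on_nth)
  then have "inv_into {..<length c} ((!) c) (c ! i) = i" using assms(2) by (simp add: inv_into_f_f)
  then show ?thesis by (simp add: nxt_def)
qed

lemma cycle_edge_nth:
  assumes c: "is_cycle V E c" and i: "i < length c"
  shows "E (c ! i) (c ! (Suc i mod length c))"
proof (cases "Suc i < length c")
  case True
  then show ?thesis using c by (simp add: is_cycle_def)
next
  case False
  then have si: "Suc i = length c" using i by simp
  then have i': "i = length c - 1" "Suc i mod length c = 0" by auto
  have ne: "c \<noteq> []" using i by auto
  have "E (last c) (hd c)" using c by (simp add: is_cycle_def)
  then show ?thesis using i' ne by (simp add: last_conv_nth hd_conv_nth)
qed

lemma nxt_in:
  assumes c: "is_cycle V E c" and v: "v \<in> set c"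
  shows "nxt c v \<in> set c" "E v (nxt c v)"
proof -
  obtain i where i: "i < length c" "c ! i = v" using v by (auto simp: in_set_conv_nth)
  have d: "distinct c" using c by (simp add: is_cycle_def)
  have "nxt c v = c ! (Suc i mod length c)" using nxt_nth[OF d i(1)] i(2) by simp
  moreover have "Suc i mod length c < length c" using i by (intro mod_less_divisor) auto
  ultimately show "nxt c v \<in> set c" "E v (nxt c v)"
    using cycle_edge_nth[OF c i(1)] i(2) by auto
qed

lemma nxt_inj:
  assumes c: "is_cycle V E c"
  shows "inj_on (nxt c) (set c)"
proof
  fix v w assume v: "v \<in> set c" and w: "w \<in> set c" and eq: "nxt c v = nxt c w"
  obtain i where i: "i < length c" "c ! i = v" using v by (auto simp: in_set_conv_nth)
  obtain j where j: "j < length c" "c ! j = w" using w by (auto simp: in_set_conv_nth)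
  have d: "distinct c" using c by (simp add: is_cycle_def)
  have "c ! (Suc i mod length c) = c ! (Suc j mod length c)"
    using eq nxt_nth[OF d i(1)] nxt_nth[OF d j(1)] i(2) j(2) by simp
  moreover have "Suc i mod length c < length c" "Suc j mod length c < length c"
    using i j by (intro mod_less_divisor; auto)+
  ultimately have "Suc i mod length c = Suc j mod length c"
    using d by (simp add: nth_eq_iff_index_eq)
  then have "i = j" using i(1) j(1)
    by (auto simp: mod_Suc split: if_splits)
  then show "v = w" using i j by simp
qed

lemma ext_R1:
  assumes sg: "simple_graph V E" and c: "is_cycle V E c" and v: "v \<in> set c"
    and y: "y \<notin> set c" "y \<in> V" and e1: "E v y" and e2: "E y (nxt c v)"
  shows "\<exists>c'. is_cycle V E c' \<and> set c \<subseteq> set c' \<and> length c' = length c + 1"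
proof -
  obtain i where i: "i < length c" "c ! i = v" using v by (auto simp: in_set_conv_nth)
  have d: "distinct c" using c by (simp add: is_cycle_def)
  define c' where "c' = rotate (Suc i) c"
  have ne: "c \<noteq> []" using i by auto
  have cc: "is_cycle V E c'" unfolding c'_def by (rule cycle_rotate[OF sg c])
  have lc: "length c' = length c" "set c' = set c" by (simp_all add: c'_def)
  have "hd c' = c ! (Suc i mod length c)" unfolding c'_def by (rule hd_rotate_conv_nth[OF ne])
  then have h: "hd c' = nxt c v" using nxt_nth[OF d i(1)] i(2) by simp
  have ne': "c' \<noteq> []" using ne lc by auto
  have "last c' = c' ! (length c - 1)" using ne' lc by (simp add: last_conv_nth)
  also have "\<dots> = c ! ((Suc i + (length c - 1)) mod length c)"
    unfolding c'_def by (rule nth_rotate) (use ne in simp)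
  also have "(Suc i + (length c - 1)) mod length c = i"
    using i(1) by (metis Suc_diff_1 add_Suc add_Suc_right gr_implies_not0 mod_add_self2 mod_less not_gr0 plus_nat.add_0)
  finally have l: "last c' = v" using i(2) by simp
  have "is_cycle V E (c' @ [y])"
    by (rule cycle_snoc[OF sg cc]) (use y lc l h e1 e2 in auto)
  then show ?thesis using lc by (intro exI[of _ "c' @ [y]"]) auto
qed

lemma ext_R3:
  assumes sg: "simple_graph V E" and c: "is_cycle V E c" and v: "v \<in> set c" and w: "w \<in> set c"
    and vw: "v \<noteq> w" and x: "x \<notin> set c" "x \<in> V" and e1: "E x v" and e2: "E x w"
    and e3: "E (nxt c v) (nxt c w)"
  shows "\<exists>c'. is_cycle V E c' \<and> set c \<subseteq> set c' \<and> length c' = length c + 1"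
proof -
  obtain i where i: "i < length c" "c ! i = v" using v by (auto simp: in_set_conv_nth)
  obtain j where j: "j < length c" "c ! j = w" using w by (auto simp: in_set_conv_nth)
  have d: "distinct c" using c by (simp add: is_cycle_def)
  define m where "m = length c"
  have m0: "0 < m" using i m_def by auto
  define c' where "c' = rotate (Suc i) c"
  have ne: "c \<noteq> []" using i by auto
  have cc: "is_cycle V E c'" unfolding c'_def by (rule cycle_rotate[OF sg c])
  have lc: "length c' = m" "set c' = set c" by (simp_all add: c'_def m_def)
  have rn: "c' ! k = c ! ((Suc i + k) mod m)" if "k < m" for k
    unfolding c'_def m_def by (rule nth_rotate) (use that m_def in simp)
  have "hd c' = c ! (Suc i mod length c)" unfolding c'_def by (rule hd_rotate_conv_nth[OF ne])
  then have h: "hd c' = nxt c v" using nxt_nth[OF d i(1)] i(2) by simp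
  have ne': "c' \<noteq> []" using ne lc m_def by auto
  have "last c' = c' ! (m - 1)" using ne' lc by (simp add: last_conv_nth)
  also have "\<dots> = c ! ((Suc i + (m - 1)) mod m)" using rn m0 by simp
  also have "(Suc i + (m - 1)) mod m = i"
    using i(1) m_def by (metis Suc_diff_1 add_Suc add_Suc_right gr_implies_not0 mod_add_self2 mod_less not_gr0 plus_nat.add_0)
  finally have l: "last c' = v" using i(2) by simp
  obtain k where k: "k < m" "c' ! k = w" using w lc by (metis in_set_conv_nth)
  have "k \<noteq> m - 1" using k l vw \<open>last c' = c' ! (m - 1)\<close> by auto
  then have sk: "Suc k < m" using k by auto
  have "c ! ((Suc i + k) mod m) = c ! j" using rn k j by simp
  moreover have "(Suc i + k) mod m < m" using m0 by simp
  ultimately have kj: "(Suc i + k) mod m = j"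
    using d j m_def nth_eq_iff_index_eq by metis
  define P where "P = take (Suc k) c'"
  define Q where "Q = drop (Suc k) c'"
  have PQ: "c' = P @ Q" by (simp add: P_def Q_def)
  have Pne: "P \<noteq> []" using ne' by (simp add: P_def)
  have Qne: "Q \<noteq> []" using sk lc by (simp add: Q_def)
  have hP: "hd P = nxt c v" using h ne' by (simp add: P_def)
  have "last P = P ! k" using sk lc Pne by (simp add: P_def last_conv_nth min_def)
  then have lP: "last P = w" using k sk lc by (simp add: P_def)
  have lQ: "last Q = v" using l Qne PQ by (metis last_appendR)
  have "hd Q = c' ! Suc k" using sk lc by (simp add: Q_def hd_drop_conv_nth)
  also have "\<dots> = c ! ((Suc i + Suc k) mod m)" using rn sk by simp
  also have "(Suc i + Suc k) mod m = Suc ((Suc i + k) mod m) mod m" by (simp add: mod_Suc_eq)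
  also have "\<dots> = Suc j mod m" using kj by simp
  finally have hQ: "hd Q = nxt c w" using nxt_nth[OF d j(1)] j(2) m_def by simp
  have c1: "is_cycle V E (P @ Q)" using cc PQ by simp
  have x1: "x \<notin> set (P @ Q)" using x lc PQ by metis
  have f1: "E (hd P) (hd Q)" using hP hQ e3 by simp
  have f2: "E (last Q) x" using lQ e1 sg_sym[OF sg] by simp
  have f3: "E x (last P)" using lP e2 by simp
  have "is_cycle V E (rev P @ Q @ [x])"
    by (rule cycle_flip[OF sg c1 Pne Qne x1 x(2) f1 f2 f3])
  moreover have "set (rev P @ Q @ [x]) \<supseteq> set c" using PQ lc by auto
  moreover have "length (rev P @ Q @ [x]) = length (P @ Q) + 1" by simp
  then have "length (rev P @ Q @ [x]) = length c + 1" using PQ lc m_def by simp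
  ultimately show ?thesis by blast
qed

lemma path_cross:
  assumes "\<forall>i. Suc i < length p \<longrightarrow> E (p ! i) (p ! Suc i)" "p \<noteq> []" "Q (hd p)" "\<not> Q (last p)"
  shows "\<exists>i. Suc i < length p \<and> Q (p ! i) \<and> \<not> Q (p ! Suc i) \<and> E (p ! i) (p ! Suc i)"
  using assms
proof (induction p)
  case Nil then show ?case by simp
next
  case (Cons a p)
  show ?case
  proof (cases p)
    case Nil then show ?thesis using Cons.prems by simp
  next
    case (Cons b q)
    show ?thesis
    proof (cases "Q b")
      case True
      have "\<forall>i. Suc i < length p \<longrightarrow> E (p ! i) (p ! Suc i)"
        using Cons.prems(1) by (metis Suc_less_eq length_Cons nth_Cons_Suc)
      moreover have "\<not> Q (last p)" using Cons.prems(4) \<open>p = b # q\<close> by simp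
      ultimately obtain i where "Suc i < length p" "Q (p ! i)" "\<not> Q (p ! Suc i)" "E (p ! i) (p ! Suc i)"
        using Cons.IH True \<open>p = b # q\<close> by auto
      then show ?thesis by (intro exI[of _ "Suc i"]) simp
    next
      case False
      have "E a b" using Cons.prems(1) \<open>p = b # q\<close> by (metis length_Cons nth_Cons_0 nth_Cons_Suc zero_less_Suc Suc_less_eq)
      then show ?thesis using False Cons.prems(3) \<open>p = b # q\<close> by (intro exI[of _ 0]) simp
    qed
  qed
qed

lemma ext1:
  assumes sg: "simple_graph V E" and conn: "connected_graph V E"
    and cond: "\<forall>v\<in>V. \<forall>u\<in>nbhd V E v. \<forall>w\<in>nbhd V E v. u \<noteq> w \<longrightarrow>
           induced_degree (nbhd V E v) E u + induced_degree (nbhd V E v) E w \<ge> degree V E v"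
    and c: "is_cycle V E c" and nv: "set c \<noteq> V"
  shows "\<exists>c'. is_cycle V E c' \<and> set c \<subseteq> set c' \<and> length c' = length c + 1"
proof (rule ccontr)
  assume neg: "\<not> ?thesis"
  have cV: "set c \<subseteq> V" using c by (simp add: is_cycle_def)
  have finV: "finite V" using sg by (simp add: simple_graph_def)
  have symE: "E a b \<Longrightarrow> E b a" for a b using sg_sym[OF sg] .
  have irr: "\<not> E a a" for a using sg_irr[OF sg] .
  have symI: "E a b = E b a" for a b using sg_sym[OF sg] by blast
  have R1: "\<not> (E v y \<and> E y (nxt c v))" if "v \<in> set c" "y \<in> V" "y \<notin> set c" for v y
    using ext_R1[OF sg c that(1) that(3) that(2)] neg by blast
  obtain z where z: "z \<in> V" "z \<notin> set c" using nv cV by blast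
  obtain a where a: "a \<in> set c" using c by (cases c) (auto simp: is_cycle_def)
  obtain p where p: "is_path V E p" "hd p = a" "last p = z"
    using conn a cV z unfolding connected_graph_def by blast
  obtain i where i: "Suc i < length p" "p ! i \<in> set c" "p ! Suc i \<notin> set c" "E (p ! i) (p ! Suc i)"
    using path_cross[of p E "\<lambda>v. v \<in> set c"] p a z unfolding is_path_def by blast
  define x where "x = p ! Suc i"
  have xV: "x \<in> V" and xc: "x \<notin> set c" using i sg_V[OF sg] by (auto simp: x_def)
  define X where "X = {v \<in> set c. E x v}"
  have Xne: "X \<noteq> {}" using i symI by (auto simp: X_def x_def)
  have finX: "finite X" by (simp add: X_def)
  have R3: "\<not> E (nxt c v) (nxt c w)" if "v \<in> X" "w \<in> X" "v \<noteq> w" for v w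
  proof
    assume e: "E (nxt c v) (nxt c w)"
    have f: "v \<in> set c" "w \<in> set c" "E x v" "E x w" using that by (auto simp: X_def)
    show False using ext_R3[OF sg c f(1) f(2) that(3) xc xV f(3) f(4) e] neg by blast
  qed
  define Gs where "Gs w = {u \<in> X. E u w \<and> E u (nxt c w)}" for w
  define Hs where "Hs w = {v \<in> X. E v w \<and> E w (nxt c v)}" for w
  have key: "2 + card (Hs w) \<le> card (Gs w)" if w: "w \<in> X" for w
  proof -
    have wc: "w \<in> set c" and xw: "E x w" using w by (auto simp: X_def)
    define L where "L = nbhd V E w"
    define A where "A = {z \<in> L. E x z}"
    define B where "B = {z \<in> L. E (nxt c w) z}"
    have nw: "nxt c w \<in> set c" "E w (nxt c w)" using nxt_in[OF c wc] by auto
    have finL: "finite L" using finV by (simp add: L_def nbhd_def)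
    have xL: "x \<in> L" using xV xw symI by (simp add: L_def nbhd_def)
    have nL: "nxt c w \<in> L" using nw cV by (auto simp: L_def nbhd_def)
    have xn: "x \<noteq> nxt c w" using xc nw by auto
    have wV: "w \<in> V" using wc cV by blast
    have c1: "\<forall>u\<in>L. \<forall>w'\<in>L. u \<noteq> w' \<longrightarrow> induced_degree L E u + induced_degree L E w' \<ge> degree V E w"
      using bspec[OF cond wV] unfolding L_def .
    have "induced_degree L E x + induced_degree L E (nxt c w) \<ge> degree V E w"
      using c1 xL nL xn by blast
    then have ge: "card A + card B \<ge> card L"
      unfolding A_def B_def induced_degree_def degree_def L_def .
    have finA: "finite A" using finL by (simp add: A_def)
    have finB: "finite B" using finL by (simp add: B_def)
    have UI: "card A + card B = card (A \<union> B) + card (A \<inter> B)"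
      by (rule card_Un_Int[OF finA finB])
    have AB: "A \<inter> B = Gs w"
    proof
      show "A \<inter> B \<subseteq> Gs w"
      proof
        fix u assume u: "u \<in> A \<inter> B"
        then have uV: "u \<in> V" "E w u" "E x u" "E (nxt c w) u" by (auto simp: A_def B_def L_def nbhd_def)
        have "u \<in> set c" using R1[OF wc uV(1)] uV symE by blast
        then show "u \<in> Gs w" using uV symI by (auto simp: Gs_def X_def)
      qed
    next
      show "Gs w \<subseteq> A \<inter> B"
        using cV symI by (auto simp: Gs_def X_def A_def B_def L_def nbhd_def)
    qed
    define D where "D = insert x (insert (nxt c w) (nxt c ` Hs w))"
    have HX: "Hs w \<subseteq> set c" by (auto simp: Hs_def X_def)
    have DL: "D \<subseteq> L - (A \<union> B)"
    proof
      fix d assume dD: "d \<in> D"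
      have xw': "E w x" using xw symE by blast
      show "d \<in> L - (A \<union> B)"
      proof (cases "d = x")
        case True
        have "\<not> E x x" by (rule irr)
        moreover have "\<not> E (nxt c w) x" using R1[OF wc xV xc] xw' symE by blast
        ultimately show ?thesis using True xL unfolding A_def B_def by blast
      next
        case F1: False
        show ?thesis
        proof (cases "d = nxt c w")
          case True
          have "\<not> E x (nxt c w)" using R1[OF wc xV xc] xw' by blast
          moreover have "\<not> E (nxt c w) (nxt c w)" by (rule irr)
          ultimately show ?thesis using True nL unfolding A_def B_def by blast
        next
          case False
          then obtain v where v: "v \<in> Hs w" "d = nxt c v" using dD F1 unfolding D_def by blast
          then have vX: "v \<in> X" and vw: "E v w" "E w (nxt c v)" unfolding Hs_def by blast+
          have vc: "v \<in> set c" and xv: "E x v" using vX unfolding X_def by blast+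
          have nv: "nxt c v \<in> set c" using nxt_in(1)[OF c vc] .
          have dL: "d \<in> L" using v(2) vw(2) nv cV unfolding L_def nbhd_def by blast
          have vx: "E v x" using xv symE by blast
          have dA: "d \<notin> A" using R1[OF vc xV xc] vx v(2) unfolding A_def by blast
          have "v \<noteq> w" using vw(1) irr by blast
          then have "\<not> E (nxt c w) (nxt c v)" using R3[OF w vX] by blast
          then have dB: "d \<notin> B" using v(2) unfolding B_def by blast
          show ?thesis using dL dA dB by blast
        qed
      qed
    qed
    have injH: "inj_on (nxt c) (Hs w)" by (rule inj_on_subset[OF nxt_inj[OF c] HX])
    have cI: "card (nxt c ` Hs w) = card (Hs w)" by (rule card_image[OF injH])
    have nI: "nxt c w \<notin> nxt c ` Hs w"
    proof
      assume "nxt c w \<in> nxt c ` Hs w"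
      then obtain v where v: "v \<in> Hs w" "nxt c w = nxt c v" by auto
      have vc: "v \<in> set c" using HX v(1) by blast
      have "v = w" using inj_onD[OF nxt_inj[OF c] v(2)[symmetric] vc wc] .
      then show False using v(1) irr unfolding Hs_def by blast
    qed
    have xI: "x \<notin> insert (nxt c w) (nxt c ` Hs w)"
      using xc nw HX nxt_in[OF c] by auto
    have fH: "finite (Hs w)" using finite_subset[OF HX] by simp
    have cD: "card D = 2 + card (Hs w)" using cI nI xI fH by (simp add: D_def)
    have le: "card (A \<union> B) + card D \<le> card L"
    proof -
      have sAB: "A \<union> B \<subseteq> L" by (auto simp: A_def B_def)
      have finAB: "finite (A \<union> B)" by (rule finite_subset[OF sAB finL])
      have finD: "finite D" using finite_subset[OF DL] finL by simp
      have dis: "(A \<union> B) \<inter> D = {}" using DL by blast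
      have "card ((A \<union> B) \<union> D) = card (A \<union> B) + card D"
        by (rule card_Un_disjoint[OF finAB finD dis])
      moreover have "(A \<union> B) \<union> D \<subseteq> L" using DL sAB by blast
      then have "card ((A \<union> B) \<union> D) \<le> card L" by (rule card_mono[OF finL])
      ultimately show ?thesis by simp
    qed
    show ?thesis using ge UI[unfolded AB] cD le by linarith
  qed
  have finG: "\<forall>w\<in>X. finite (Gs w)" and finH: "\<forall>w\<in>X. finite (Hs w)"
    using finX by (auto simp: Gs_def Hs_def)
  have "(\<Sum>w\<in>X. 2 + card (Hs w)) \<le> (\<Sum>w\<in>X. card (Gs w))"
    using key by (intro sum_mono) auto
  moreover have "(\<Sum>w\<in>X. 2 + card (Hs w)) = 2 * card X + (\<Sum>w\<in>X. card (Hs w))"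
    by (subst sum.distrib) simp
  ultimately have ineq: "2 * card X + (\<Sum>w\<in>X. card (Hs w)) \<le> (\<Sum>w\<in>X. card (Gs w))"
    by simp
  have eqS: "(SIGMA w:X. Gs w) = (\<lambda>(a, b). (b, a)) ` (SIGMA w:X. Hs w)"
  proof
    show "(SIGMA w:X. Gs w) \<subseteq> (\<lambda>(a, b). (b, a)) ` (SIGMA w:X. Hs w)"
    proof
      fix q assume "q \<in> (SIGMA w:X. Gs w)"
      then obtain w u where q: "q = (w, u)" "w \<in> X" "u \<in> Gs w" by auto
      then have "(u, w) \<in> (SIGMA w:X. Hs w)" using symI by (auto simp: Gs_def Hs_def)
      then show "q \<in> (\<lambda>(a, b). (b, a)) ` (SIGMA w:X. Hs w)" using q by force
    qed
  next
    show "(\<lambda>(a, b). (b, a)) ` (SIGMA w:X. Hs w) \<subseteq> (SIGMA w:X. Gs w)"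
      using symI by (auto simp: Gs_def Hs_def)
  qed
  have "card (SIGMA w:X. Gs w) = card (SIGMA w:X. Hs w)"
    unfolding eqS by (intro card_image) (auto simp: inj_on_def)
  then have "(\<Sum>w\<in>X. card (Gs w)) = (\<Sum>w\<in>X. card (Hs w))"
    using finX finG finH by simp
  then have "card X = 0" using ineq by linarith
  then show False using Xne finX by simp
qed

lemma ham_from_cycle:
  assumes sg: "simple_graph V E" and conn: "connected_graph V E"
    and cond: "\<forall>v\<in>V. \<forall>u\<in>nbhd V E v. \<forall>w\<in>nbhd V E v. u \<noteq> w \<longrightarrow>
           induced_degree (nbhd V E v) E u + induced_degree (nbhd V E v) E w \<ge> degree V E v"
  shows "is_cycle V E c \<Longrightarrow> hamiltonian V E"
proof (induction "card V - length c" arbitrary: c rule: less_induct)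
  case less
  show ?case
  proof (cases "set c = V")
    case True then show ?thesis using less.prems unfolding hamiltonian_def by blast
  next
    case False
    obtain c' where c': "is_cycle V E c'" "set c \<subseteq> set c'" "length c' = length c + 1"
      using ext1[OF sg conn cond less.prems False] by blast
    have finV: "finite V" using sg by (simp add: simple_graph_def)
    have "length c' = card (set c')" using c'(1) by (simp add: is_cycle_def distinct_card)
    also have "\<dots> \<le> card V" using c'(1) finV by (intro card_mono) (auto simp: is_cycle_def)
    finally have "card V - length c' < card V - length c" using c'(3) by simp
    then show ?thesis using less.hyps c'(1) by blast
  qed
qed

lemma exists_cherry:
  assumes sg: "simple_graph V E" and conn: "connected_graph V E" and n: "card V \<ge> 3"
  shows "\<exists>v u w. E v u \<and> E v w \<and> u \<noteq> w"
proof -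
  have finV: "finite V" using sg by (simp add: simple_graph_def)
  have "V \<noteq> {}" using n by (cases "V = {}") auto
  then obtain a where a: "a \<in> V" by blast
  have "card (V - {a}) \<ge> 2" using n a finV by (simp add: card_Diff_singleton)
  then have "V - {a} \<noteq> {}" by (cases "V - {a} = {}") auto
  then obtain b where b: "b \<in> V" "b \<noteq> a" by blast
  obtain p where p: "is_path V E p" "hd p = a" "last p = b"
    using conn a b unfolding connected_graph_def by blast
  obtain i where "E (p ! i) (p ! Suc i)" "p ! i = a" "p ! Suc i \<noteq> a"
    using path_cross[of p E "\<lambda>v. v = a"] p b unfolding is_path_def by blast
  then obtain a' where a': "E a a'" "a' \<noteq> a" by blast
  have "card {a, a'} \<le> 2" by (simp add: card_insert_le_m1)
  moreover have "card V - card {a, a'} \<le> card (V - {a, a'})" by (rule diff_card_le_card_Diff) simp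
  ultimately have "card (V - {a, a'}) > 0" using n by linarith
  then have "V - {a, a'} \<noteq> {}" by (metis card.empty less_irrefl)
  then obtain q where q: "q \<in> V" "q \<noteq> a" "q \<noteq> a'" by blast
  obtain p2 where p2: "is_path V E p2" "hd p2 = q" "last p2 = a"
    using conn a q unfolding connected_graph_def by blast
  obtain j where j: "E (p2 ! j) (p2 ! Suc j)" "p2 ! j \<notin> {a, a'}" "p2 ! Suc j \<in> {a, a'}"
    using path_cross[of p2 E "\<lambda>v. v \<notin> {a, a'}"] p2 q unfolding is_path_def by blast
  have symE: "E x y \<Longrightarrow> E y x" for x y using sg_sym[OF sg] .
  show ?thesis
  proof (cases "p2 ! Suc j = a")
    case True
    then show ?thesis using j a' symE by blast
  next
    case False
    then have "p2 ! Suc j = a'" using j by blast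
    then show ?thesis using j a' symE by blast
  qed
qed

lemma exists_triangle:
  assumes sg: "simple_graph V E" and conn: "connected_graph V E" and n: "card V \<ge> 3"
    and cond: "\<forall>v\<in>V. \<forall>u\<in>nbhd V E v. \<forall>w\<in>nbhd V E v. u \<noteq> w \<longrightarrow>
           induced_degree (nbhd V E v) E u + induced_degree (nbhd V E v) E w \<ge> degree V E v"
  shows "\<exists>c. is_cycle V E c"
proof -
  obtain v u w where vuw: "E v u" "E v w" "u \<noteq> w" using exists_cherry[OF sg conn n] by blast
  have vV: "v \<in> V" and uV: "u \<in> V" and wV: "w \<in> V" using vuw sg_V[OF sg] by blast+
  define L where "L = nbhd V E v"
  have finV: "finite V" using sg by (simp add: simple_graph_def)
  have finL: "finite L" using finV by (simp add: L_def nbhd_def)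
  have uL: "u \<in> L" and wL: "w \<in> L" using vuw uV wV by (auto simp: L_def nbhd_def)
  have "induced_degree L E u + induced_degree L E w \<ge> degree V E v"
    using bspec[OF cond vV] uL wL vuw(3) unfolding L_def by blast
  moreover have "degree V E v \<ge> 2"
  proof -
    have "{u, w} \<subseteq> L" using uL wL by blast
    then have "card {u, w} \<le> card L" by (rule card_mono[OF finL])
    then show ?thesis using vuw(3) by (simp add: degree_def L_def)
  qed
  ultimately have "induced_degree L E u > 0 \<or> induced_degree L E w > 0" by linarith
  then obtain s where s: "s \<in> L" "induced_degree L E s > 0" using uL wL by blast
  then have "{z \<in> L. E s z} \<noteq> {}" unfolding induced_degree_def by (cases "{z \<in> L. E s z} = {}") auto
  then obtain z where "z \<in> L" "E s z" by blast
  then have sz: "s \<in> L" "z \<in> L" "E s z" using s by auto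
  have e: "E v s" "E v z" "s \<in> V" "z \<in> V" using sz by (auto simp: L_def nbhd_def)
  have irr: "\<not> E a a" for a using sg_irr[OF sg] .
  have symE: "E a b \<Longrightarrow> E b a" for a b using sg_sym[OF sg] .
  have d1: "v \<noteq> s" "v \<noteq> z" "s \<noteq> z" using e sz(3) irr by metis+
  have zv: "E z v" using e(2) symE by blast
  have "is_cycle V E [v, s, z]"
    unfolding is_cycle_alt using e sz(3) vV d1 zv by simp
  then show ?thesis by blast
qed

theorem mainTheorem1:
  fixes V :: "'a set" and E :: "'a \<Rightarrow> 'a \<Rightarrow> bool"
  assumes "simple_graph V E"
    and "connected_graph V E"
    and "card V \<ge> 3"
    and "\<forall>v\<in>V. \<forall>u\<in>nbhd V E v. \<forall>w\<in>nbhd V E v. u \<noteq> w \<longrightarrow>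
           induced_degree (nbhd V E v) E u + induced_degree (nbhd V E v) E w \<ge> degree V E v"
  shows "hamiltonian V E \<and> extendable_12 V E"
proof
  obtain c where "is_cycle V E c" using exists_triangle[OF assms(1,2,3,4)] by blast
  then show "hamiltonian V E" using ham_from_cycle[OF assms(1,2,4)] by blast
next
  show "extendable_12 V E" unfolding extendable_12_def
  proof (intro allI impI)
    fix c assume "is_cycle V E c \<and> set c \<noteq> V"
    then obtain c' where "is_cycle V E c'" "set c \<subseteq> set c'" "length c' = length c + 1"
      using ext1[OF assms(1,2,4)] by blast
    then show "\<exists>c'. is_cycle V E c' \<and> set c \<subseteq> set c' \<and> (length c' = length c + 1 \<or> length c' = length c + 2)"
      by blast
  qed
qed

end
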